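(* Let $(A,\mathfrak m)$ be a Noetherian local ring with infinite residue field, $I$ an $\mathfrak m$-primary ideal, and $M$ a finitely generated $A$-module with $\dim M = 1$. Let $b$ be a positive integer such that $IM \subseteq \mathfrak m^b M$. Then $h_{\overline{G_I(M)}}(0) \ge b$, where $\overline{G_I(M)} = G_I(M)/H^0_{G_+}(G_I(M))$.
   Context: $G = \bigoplus_{n\ge0} I^n/I^{n+1}$, $G_+ = \bigoplus_{n>0}I^n/I^{n+1}$, $G_I(M) = \bigoplus_{n\ge0} I^nM/I^{n+1}M$ is the associated graded module, and for a graded $G$-module $F$, $h_F(t) = \ell(F_t)$ denotes the length of its degree-$t$ component. *)

theory Defs
  imports Main "HOL-Library.Extended_Nat"
begin

section \<open>Commutative algebra over a ring A = UNIV :: 'a set, module M = UNIV :: 'b set\<close>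

definition ideal :: "'a::comm_ring_1 set \<Rightarrow> bool" where
  "ideal J \<longleftrightarrow> 0 \<in> J \<and> (\<forall>x\<in>J. \<forall>y\<in>J. x + y \<in> J) \<and> (\<forall>r. \<forall>x\<in>J. r * x \<in> J)"

definition prime_ideal :: "'a::comm_ring_1 set \<Rightarrow> bool" where
  "prime_ideal P \<longleftrightarrow> ideal P \<and> P \<noteq> UNIV \<and> (\<forall>x y. x * y \<in> P \<longrightarrow> x \<in> P \<or> y \<in> P)"

definition maximal_ideal :: "'a::comm_ring_1 set \<Rightarrow> bool" where
  "maximal_ideal P \<longleftrightarrow> ideal P \<and> P \<noteq> UNIV \<and> (\<forall>J. ideal J \<and> P \<subseteq> J \<longrightarrow> J = P \<or> J = UNIV)"

definition noetherian_ring :: "'a::comm_ring_1 itself \<Rightarrow> bool" where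
  "noetherian_ring T \<longleftrightarrow>
     (\<forall>f :: nat \<Rightarrow> 'a set. (\<forall>n. ideal (f n)) \<and> (\<forall>n. f n \<subseteq> f (Suc n))
        \<longrightarrow> (\<exists>N. \<forall>n\<ge>N. f n = f N))"

definition local_ring :: "'a::comm_ring_1 set \<Rightarrow> bool" where
  "local_ring m \<longleftrightarrow> maximal_ideal m \<and> (\<forall>P. maximal_ideal P \<longrightarrow> P = m)"

text \<open>The equivalence relation whose classes form the residue field A/m.\<close>
definition residue_rel :: "'a::comm_ring_1 set \<Rightarrow> ('a \<times> 'a) set" where
  "residue_rel m = {(x, y). x - y \<in> m}"

definition radical :: "'a::comm_ring_1 set \<Rightarrow> 'a set" where
  "radical J = {x. \<exists>n. x ^ n \<in> J}"

definition m_primary :: "'a::comm_ring_1 set \<Rightarrow> 'a set \<Rightarrow> bool" where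
  "m_primary m J \<longleftrightarrow> ideal J \<and> J \<noteq> UNIV \<and> radical J = m
      \<and> (\<forall>x y. x * y \<in> J \<and> x \<notin> J \<longrightarrow> y \<in> radical J)"

definition ideal_prod :: "'a::comm_ring_1 set \<Rightarrow> 'a set \<Rightarrow> 'a set" where
  "ideal_prod J K = ideal hull {a * c | a c. a \<in> J \<and> c \<in> K}"

primrec ideal_pow :: "'a::comm_ring_1 set \<Rightarrow> nat \<Rightarrow> 'a set" where
  "ideal_pow J 0 = UNIV"
| "ideal_pow J (Suc n) = ideal_prod J (ideal_pow J n)"

definition submod :: "('a::comm_ring_1 \<Rightarrow> 'b::ab_group_add \<Rightarrow> 'b) \<Rightarrow> 'b set \<Rightarrow> bool" where
  "submod scale N \<longleftrightarrow> 0 \<in> N \<and> (\<forall>x\<in>N. \<forall>y\<in>N. x + y \<in> N) \<and> (\<forall>r. \<forall>x\<in>N. scale r x \<in> N)"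

definition fin_gen :: "('a::comm_ring_1 \<Rightarrow> 'b::ab_group_add \<Rightarrow> 'b) \<Rightarrow> bool" where
  "fin_gen scale \<longleftrightarrow> (\<exists>S. finite S \<and> submod scale hull S = UNIV)"

definition idmul :: "('a::comm_ring_1 \<Rightarrow> 'b::ab_group_add \<Rightarrow> 'b) \<Rightarrow> 'a set \<Rightarrow> 'b set \<Rightarrow> 'b set" where
  "idmul scale J N = submod scale hull {scale a x | a x. a \<in> J \<and> x \<in> N}"

definition ann :: "('a::comm_ring_1 \<Rightarrow> 'b::ab_group_add \<Rightarrow> 'b) \<Rightarrow> 'a set" where
  "ann scale = {a. \<forall>x. scale a x = 0}"

definition krull_dim_quot :: "'a::comm_ring_1 set \<Rightarrow> enat" where
  "krull_dim_quot J = Sup {enat n | n. \<exists>P :: nat \<Rightarrow> 'a set.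
      (\<forall>i\<le>n. prime_ideal (P i) \<and> J \<subseteq> P i) \<and> (\<forall>i<n. P i \<subset> P (Suc i))}"

definition module_dim :: "('a::comm_ring_1 \<Rightarrow> 'b::ab_group_add \<Rightarrow> 'b) \<Rightarrow> enat" where
  "module_dim scale = krull_dim_quot (ann scale)"

text \<open>Length of the quotient module N/N' (N' \<subseteq> N submodules): supremum of lengths
  of strict chains of submodules from N' to N.\<close>
definition mlength :: "('a::comm_ring_1 \<Rightarrow> 'b::ab_group_add \<Rightarrow> 'b) \<Rightarrow> 'b set \<Rightarrow> 'b set \<Rightarrow> enat" where
  "mlength scale N' N = Sup {enat n | n. \<exists>C :: nat \<Rightarrow> 'b set. C 0 = N' \<and> C n = N
      \<and> (\<forall>i\<le>n. submod scale (C i)) \<and> (\<forall>i<n. C i \<subset> C (Suc i))}"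

definition filt :: "('a::comm_ring_1 \<Rightarrow> 'b::ab_group_add \<Rightarrow> 'b) \<Rightarrow> 'a set \<Rightarrow> nat \<Rightarrow> 'b set" where
  "filt scale I n = idmul scale (ideal_pow I n) UNIV"

text \<open>Degree-t component of H^0_{G_+}(G_I(M)), represented by its preimage in I^t M:
  a class [x] in G_t = I^tM/I^{t+1}M is killed by a power of G_+ iff for some k,
  all homogeneous elements [a] in G_j (j \<ge> k, a in I^j) satisfy [a][x] = 0 in G_{t+j},
  i.e. a x in I^{t+j+1} M (G_+^k = the sum of the G_j with j \<ge> k, as G is standard graded).\<close>
definition H0_comp :: "('a::comm_ring_1 \<Rightarrow> 'b::ab_group_add \<Rightarrow> 'b) \<Rightarrow> 'a set \<Rightarrow> nat \<Rightarrow> 'b set" where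
  "H0_comp scale I t = {x \<in> filt scale I t. \<exists>k. \<forall>j\<ge>k. \<forall>a\<in>ideal_pow I j.
      scale a x \<in> filt scale I (t + j + 1)}"

text \<open>h of G_I(M)/H^0_{G_+}(G_I(M)) at t: length of G_t / H^0_t = I^tM / H0_comp t.\<close>
definition h_Gbar :: "('a::comm_ring_1 \<Rightarrow> 'b::ab_group_add \<Rightarrow> 'b) \<Rightarrow> 'a set \<Rightarrow> nat \<Rightarrow> enat" where
  "h_Gbar scale I t = mlength scale (H0_comp scale I t) (filt scale I t)"

end

theory Submission
  imports Defs
begin


interpretation R: module "(*) :: 'a::comm_ring_1 \<Rightarrow> 'a \<Rightarrow> 'a"
  by standard (auto simp: algebra_simps)

lemma ideal_eq: "ideal = R.subspace"
  by (auto simp: fun_eq_iff ideal_def R.subspace_def)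

lemma ihull: "ideal hull S = R.span S"
  by (simp add: ideal_eq R.span_def)

lemma ideal_prod_ideal: "ideal (ideal_prod J K)"
  unfolding ideal_prod_def ihull unfolding ideal_eq by (rule R.subspace_span)

lemma ideal_UNIV: "ideal UNIV"
  by (simp add: ideal_def)

lemma ideal_pow_ideal: "ideal (ideal_pow J n)"
  by (cases n) (auto simp: ideal_prod_ideal ideal_UNIV)

lemma prod_mem: "a \<in> J \<Longrightarrow> c \<in> K \<Longrightarrow> a * c \<in> ideal_prod J K"
  unfolding ideal_prod_def by (rule hull_inc) auto

lemma prod_sub: "ideal L \<Longrightarrow> (\<And>a c. a \<in> J \<Longrightarrow> c \<in> K \<Longrightarrow> a * c \<in> L) \<Longrightarrow> ideal_prod J K \<subseteq> L"
  unfolding ideal_prod_def by (rule hull_minimal) auto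

lemma prod_comm: "ideal_prod J K = ideal_prod K J"
  unfolding ideal_prod_def by (rule arg_cong[where f="(hull) ideal"]) (auto; metis mult.commute)

lemma ideal_mult: "ideal J \<Longrightarrow> c \<in> J \<Longrightarrow> a * c \<in> J"
  by (simp add: ideal_def)
lemma ideal_mult2: "ideal J \<Longrightarrow> c \<in> J \<Longrightarrow> c * a \<in> J"
  by (simp add: ideal_def mult.commute[of c])

lemma prod_le_right: "ideal K \<Longrightarrow> ideal_prod J K \<subseteq> K"
  by (rule prod_sub) (auto intro: ideal_mult)

lemma prod_le_left: "ideal J \<Longrightarrow> ideal_prod J K \<subseteq> J"
  by (rule prod_sub) (auto intro: ideal_mult2)

lemma prod_mono: "J \<subseteq> J' \<Longrightarrow> K \<subseteq> K' \<Longrightarrow> ideal_prod J K \<subseteq> ideal_prod J' K'"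
  by (rule prod_sub[OF ideal_prod_ideal]) (auto intro: prod_mem)

lemma pow_Suc_le: "ideal_pow J (Suc n) \<subseteq> ideal_pow J n"
  using prod_le_right[OF ideal_pow_ideal] by simp

lemma pow_antimono: "m \<le> n \<Longrightarrow> ideal_pow J n \<subseteq> ideal_pow J m"
proof (induction n)
  case 0 then show ?case by simp
next
  case (Suc n)
  then show ?case
    by (metis le_Suc_eq order_refl order_trans pow_Suc_le)
qed

lemma pow_mem: "a \<in> J \<Longrightarrow> a ^ n \<in> ideal_pow J n"
  by (induction n) (auto intro: prod_mem)

lemma ideal_0: "ideal J \<Longrightarrow> 0 \<in> J" by (simp add: ideal_def)
lemma ideal_add: "ideal J \<Longrightarrow> x \<in> J \<Longrightarrow> y \<in> J \<Longrightarrow> x + y \<in> J" by (simp add: ideal_def)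
lemma ideal_diff: "ideal J \<Longrightarrow> x \<in> J \<Longrightarrow> y \<in> J \<Longrightarrow> x - y \<in> J"
  unfolding ideal_eq by (rule R.subspace_diff)
lemma ideal_1: "ideal J \<Longrightarrow> 1 \<in> J \<Longrightarrow> J = UNIV"
  using ideal_mult[of J 1] by auto

lemma R_span_mult: "x \<in> R.span G \<Longrightarrow> x * c \<in> R.span G"
  using R.span_scale[of x G c] by (simp add: mult.commute)

context module begin

lemma submod_eq: "submod scale = subspace"
  by (auto simp: fun_eq_iff submod_def subspace_def)

lemma shull: "submod scale hull S = span S"
  by (simp add: submod_eq span_def)

lemma pre_sub: "subspace T \<Longrightarrow> subspace {z. scale a z \<in> T}"
  unfolding subspace_def by (auto simp del: scale_scale simp: scale_right_distrib) (metis scale_left_commute)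

lemma pre_ideal: "subspace T \<Longrightarrow> ideal {c. scale c x \<in> T}"
  unfolding subspace_def ideal_def by (auto simp del: scale_scale simp: scale_left_distrib) (metis scale_scale)

lemma idmul_span: "idmul scale J N = span {scale a x | a x. a \<in> J \<and> x \<in> N}"
  by (simp add: idmul_def shull)

lemma idmul_subspace: "subspace (idmul scale J N)"
  by (simp add: idmul_span)

lemma idmul_mem: "a \<in> J \<Longrightarrow> x \<in> N \<Longrightarrow> scale a x \<in> idmul scale J N"
  unfolding idmul_span by (rule span_base) auto

lemma idmul_sub: "subspace S \<Longrightarrow> (\<And>a x. a \<in> J \<Longrightarrow> x \<in> N \<Longrightarrow> scale a x \<in> S) \<Longrightarrow> idmul scale J N \<subseteq> S"
  unfolding idmul_span by (rule span_minimal) auto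

lemma idmul_mono: "J \<subseteq> J' \<Longrightarrow> N \<subseteq> N' \<Longrightarrow> idmul scale J N \<subseteq> idmul scale J' N'"
  by (rule idmul_sub[OF idmul_subspace]) (auto intro: idmul_mem)

lemma L1: "a \<in> J \<Longrightarrow> z \<in> idmul scale K UNIV \<Longrightarrow> scale a z \<in> idmul scale (ideal_prod J K) UNIV"
proof -
  assume a: "a \<in> J" and z: "z \<in> idmul scale K UNIV"
  have "idmul scale K UNIV \<subseteq> {z. scale a z \<in> idmul scale (ideal_prod J K) UNIV}"
  proof (rule idmul_sub)
    show "subspace {z. scale a z \<in> idmul scale (ideal_prod J K) UNIV}"
      by (rule pre_sub[OF idmul_subspace])
  next
    fix c x assume "c \<in> K" "x \<in> (UNIV::'b set)"
    then show "scale c x \<in> {z. scale a z \<in> idmul scale (ideal_prod J K) UNIV}"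
      using a by (auto intro!: idmul_mem prod_mem)
  qed
  then show ?thesis using z by auto
qed

lemma L2: "idmul scale (ideal_prod J K) UNIV \<subseteq> idmul scale J (idmul scale K UNIV)"
proof (rule idmul_sub[OF idmul_subspace])
  fix c x assume c: "c \<in> ideal_prod J K"
  have "ideal_prod J K \<subseteq> {c. scale c x \<in> idmul scale J (idmul scale K UNIV)}"
  proof (rule prod_sub)
    show "ideal {c. scale c x \<in> idmul scale J (idmul scale K UNIV)}"
      by (rule pre_ideal[OF idmul_subspace])
  next
    fix a d assume "a \<in> J" "d \<in> K"
    then show "a * d \<in> {c. scale c x \<in> idmul scale J (idmul scale K UNIV)}"
      by (auto simp flip: scale_scale intro!: idmul_mem)
  qed
  then show "scale c x \<in> idmul scale J (idmul scale K UNIV)" using c by auto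
qed

lemma idmul_prod: "idmul scale (ideal_prod J K) UNIV = idmul scale J (idmul scale K UNIV)"
  by (rule antisym[OF L2 idmul_sub[OF idmul_subspace]]) (rule L1)

lemma L3: "idmul scale J (idmul scale K N) \<subseteq> idmul scale K (idmul scale J N)"
proof (rule idmul_sub[OF idmul_subspace])
  fix a z assume a: "a \<in> J" and z: "z \<in> idmul scale K N"
  have "idmul scale K N \<subseteq> {z. scale a z \<in> idmul scale K (idmul scale J N)}"
  proof (rule idmul_sub)
    show "subspace {z. scale a z \<in> idmul scale K (idmul scale J N)}"
      by (rule pre_sub[OF idmul_subspace])
  next
    fix c y assume "c \<in> K" "y \<in> N"
    then show "scale c y \<in> {z. scale a z \<in> idmul scale K (idmul scale J N)}"
    proof -
      assume c: "c \<in> K" and y: "y \<in> N"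
      have "scale a (scale c y) = scale c (scale a y)" by (rule scale_left_commute)
      also have "\<dots> \<in> idmul scale K (idmul scale J N)" using a c y by (intro idmul_mem)
      finally show ?thesis by simp
    qed
  qed
  then show "scale a z \<in> idmul scale K (idmul scale J N)" using z by auto
qed

lemma L4: assumes S: "span S = UNIV" and J: "J = R.span G"
  shows "idmul scale J UNIV \<subseteq> span {scale g s | g s. g \<in> G \<and> s \<in> S}"
proof (rule idmul_sub[OF subspace_span])
  let ?T = "span {scale g s | g s. g \<in> G \<and> s \<in> S}"
  fix c x assume c: "c \<in> J" and x: "x \<in> (UNIV::'b set)"
  have "x \<in> span S" using S by auto
  then have "\<forall>c\<in>J. scale c x \<in> ?T"
  proof (induction rule: span_induct)
    case base
    show ?case
      unfolding subspace_def using J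
      by (auto simp: scale_right_distrib intro!: span_add span_zero R_span_mult)
  next
    case (step s)
    show ?case unfolding J
    proof
      fix c assume "c \<in> R.span G"
      then show "scale c s \<in> ?T"
      proof (induction rule: R.span_induct)
        case base
        have "ideal {c. scale c s \<in> ?T}" by (rule pre_ideal) simp
        then show ?case unfolding ideal_eq by simp
      next
        case (step g)
        then show ?case using \<open>s \<in> S\<close> by (intro span_base) auto
      qed
    qed
  qed
  then show "scale c x \<in> ?T" using c by auto
qed

end



declare R.scale_scale[simp del]

lemma acc_max:
  assumes N: "noetherian_ring TYPE('a::comm_ring_1)"
    and ne: "J0 \<in> F" and id: "\<forall>J\<in>F. ideal (J::'a set)"
  shows "\<exists>J\<in>F. \<forall>J'\<in>F. J \<subseteq> J' \<longrightarrow> J' = J"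
proof (rule ccontr)
  assume "\<not> ?thesis"
  then have step: "\<forall>J\<in>F. \<exists>J'\<in>F. J \<subset> J'" by blast
  define nxt where "nxt J = (SOME J'. J' \<in> F \<and> J \<subset> J')" for J
  have nxt: "nxt J \<in> F \<and> J \<subset> nxt J" if "J \<in> F" for J
  proof -
    from bspec[OF step that] obtain J' where "J' \<in> F \<and> J \<subset> J'" by (elim bexE) (rule that, rule conjI)
    then show ?thesis unfolding nxt_def by (rule someI)
  qed
  define f where "f n = (nxt ^^ n) J0" for n
  have fF: "f n \<in> F" for n
    by (induction n) (simp_all add: f_def ne nxt)
  have inc: "f n \<subset> f (Suc n)" for n
    using nxt[OF fF[of n]] by (simp add: f_def)
  have "(\<forall>n. ideal (f n)) \<and> (\<forall>n. f n \<subseteq> f (Suc n))" using fF id inc by blast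
  moreover have "\<forall>f :: nat \<Rightarrow> 'a set. (\<forall>n. ideal (f n)) \<and> (\<forall>n. f n \<subseteq> f (Suc n))
        \<longrightarrow> (\<exists>N. \<forall>n\<ge>N. f n = f N)" using N by (simp only: noetherian_ring_def)
  ultimately have "\<exists>M. \<forall>n\<ge>M. f n = f M" by (rule_tac mp[OF spec[of _ f]])
  then obtain M where "\<forall>n\<ge>M. f n = f M" by (elim exE)
  then have "f (Suc M) = f M" by (elim allE[of _ "Suc M"]) simp
  with inc[of M] show False by auto
qed

lemma fg:
  assumes N: "noetherian_ring TYPE('a::comm_ring_1)" and J: "ideal (J::'a set)"
  shows "\<exists>G. finite G \<and> J = R.span G"
proof -
  let ?F = "{R.span G | G. finite G \<and> G \<subseteq> J}"
  have "R.span {} \<in> ?F" by blast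
  moreover have "\<forall>K\<in>?F. ideal K" by (auto simp: ideal_eq)
  ultimately obtain K where K: "K \<in> ?F" and mx: "\<forall>K'\<in>?F. K \<subseteq> K' \<longrightarrow> K' = K"
    using acc_max[OF N] by meson
  then obtain G where G: "finite G" "G \<subseteq> J" "K = R.span G" by blast
  have sub: "R.span G \<subseteq> J" using G J by (intro R.span_minimal) (auto simp: ideal_eq)
  show ?thesis
  proof (cases "J = R.span G")
    case True then show ?thesis using G by blast
  next
    case False
    then obtain x where x: "x \<in> J" "x \<notin> R.span G" using sub by blast
    have "R.span (insert x G) \<in> ?F" using G x by auto
    moreover have "K \<subseteq> R.span (insert x G)" using G by (simp add: R.span_mono subset_insertI)
    ultimately have "R.span (insert x G) = K" using mx by blast
    then have "R.span (insert x G) = R.span G" using G by simp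
    with x show ?thesis by (metis R.span_base insertI1)
  qed
qed

lemma local_unit:
  assumes N: "noetherian_ring TYPE('a::comm_ring_1)" and L: "local_ring (m::'a set)" and a: "a \<in> m"
  shows "\<exists>u. u * (1 - a) = 1"
proof (rule ccontr)
  assume nu: "\<not> ?thesis"
  let ?F = "{K. ideal K \<and> K \<noteq> UNIV \<and> R.span {1 - a} \<subseteq> K}"
  have "1 \<notin> R.span {1 - a}" using nu by (auto simp: R.span_singleton)
  then have "R.span {1 - a} \<in> ?F" by (auto simp: ideal_eq)
  moreover have "\<forall>K\<in>?F. ideal K" by auto
  ultimately obtain K where K: "K \<in> ?F" and mx: "\<forall>K'\<in>?F. K \<subseteq> K' \<longrightarrow> K' = K"
    using acc_max[OF N] by meson
  have "maximal_ideal K"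
    unfolding maximal_ideal_def using K mx by blast
  then have "K = m" using L by (auto simp: local_ring_def)
  then have "1 - a \<in> m" using K by (auto intro: R.span_base)
  moreover have mi: "ideal m" using L by (auto simp: local_ring_def maximal_ideal_def)
  ultimately have "(1 - a) + a \<in> m" using a by (intro ideal_add)
  then have "m = UNIV" using mi ideal_1 by auto
  then show False using L by (auto simp: local_ring_def maximal_ideal_def)
qed

lemma pow_insert:
  fixes x :: "'a::comm_ring_1"
  assumes I: "ideal I" and Jn: "ideal_pow (R.span G) n \<subseteq> I" and xk: "x ^ k \<in> I"
  shows "ideal_pow (R.span (insert x G)) (n + k) \<subseteq> I"
proof -
  define J where "J = R.span G"
  define L where "L = R.span (insert x G)"
  define T where "T p = R.span {x^t * y | t y. t \<le> p \<and> y \<in> ideal_pow J (p - t)}" for p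
  have LT: "ideal_pow L p \<subseteq> T p" for p
  proof (induction p)
    case 0
    have "x^0 * 1 \<in> T 0" unfolding T_def by (rule R.span_base) auto
    then have "T 0 = UNIV" using ideal_1[of "T 0"] by (simp add: T_def ideal_eq)
    then show ?case by simp
  next
    case (Suc p)
    have "ideal_pow L (Suc p) \<subseteq> ideal_prod L (T p)" using Suc by (simp add: prod_mono)
    also have "\<dots> \<subseteq> T (Suc p)"
    proof (rule prod_sub)
      show "ideal (T (Suc p))" by (simp add: T_def ideal_eq)
    next
      fix a c assume a: "a \<in> L" and c: "c \<in> T p"
      obtain r where r: "a - r * x \<in> J" using a by (auto simp: L_def J_def R.span_breakdown_eq)
      define y where "y = a - r * x"
      have ay: "a = r * x + y" by (simp add: y_def)
      have "T p \<subseteq> {c. a * c \<in> T (Suc p)}"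
        unfolding T_def[of p]
      proof (rule R.span_minimal)
        show "R.subspace {c. a * c \<in> T (Suc p)}"
          by (rule R.pre_sub) (simp add: T_def)
      next
        show "{x ^ t * y |t y. t \<le> p \<and> y \<in> ideal_pow J (p - t)} \<subseteq> {c. a * c \<in> T (Suc p)}"
        proof safe
          fix t z assume t: "t \<le> p" and z: "z \<in> ideal_pow J (p - t)"
          have g1: "x ^ Suc t * z \<in> T (Suc p)"
          proof -
            have "Suc t \<le> Suc p" "z \<in> ideal_pow J (Suc p - Suc t)" using t z by auto
            then show ?thesis unfolding T_def
              by (rule_tac R.span_base, rule_tac CollectI, rule_tac exI[of _ "Suc t"], rule_tac exI[of _ z]) simp
          qed
          have e: "Suc p - t = Suc (p - t)" using t by simp
          have yz: "y * z \<in> ideal_pow J (Suc p - t)"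
            unfolding e ideal_pow.simps by (rule prod_mem[OF r[folded y_def] z])
          have g2: "x ^ t * (y * z) \<in> T (Suc p)"
            unfolding T_def
            by (rule_tac R.span_base, rule_tac CollectI, rule_tac exI[of _ t], rule_tac exI[of _ "y * z"]) (use t yz in simp)
          have "a * (x ^ t * z) = r * (x ^ Suc t * z) + x ^ t * (y * z)"
          proof -
            have "\<And>r x y z t. ((r * x + y) * (x ^ t * z)::'a) = r * (x ^ Suc t * z) + x ^ t * (y * z)"
              by (simp add: algebra_simps)
            then show ?thesis by (simp only: ay)
          qed
          also have "\<dots> \<in> T (Suc p)"
            unfolding T_def by (rule R.span_add[OF R.span_scale[OF g1[unfolded T_def]] g2[unfolded T_def]])
          finally show "a * (x ^ t * z) \<in> T (Suc p)" .
        qed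
      qed
      then show "a * c \<in> T (Suc p)" using c by auto
    qed
    finally show ?case .
  qed
  have "T (n + k) \<subseteq> I"
    unfolding T_def
  proof (rule R.span_minimal)
    show "R.subspace I" using I by (simp add: ideal_eq)
  next
    show "{x ^ t * y |t y. t \<le> n + k \<and> y \<in> ideal_pow J (n + k - t)} \<subseteq> I"
    proof safe
      fix t y assume t: "t \<le> n + k" and y: "y \<in> ideal_pow J (n + k - t)"
      show "x ^ t * y \<in> I"
      proof (cases "k \<le> t")
        case True
        then have "x ^ t = x ^ (t - k) * x ^ k" by (simp flip: power_add)
        then show ?thesis using xk I by (simp add: ideal_mult ideal_mult2)
      next
        case False
        then have "ideal_pow J (n + k - t) \<subseteq> ideal_pow J n" by (intro pow_antimono) auto
        then show ?thesis using y Jn I by (auto simp: J_def intro: ideal_mult)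
      qed
    qed
  qed
  then show ?thesis using LT[of "n+k"] by (simp add: L_def)
qed

lemma pow_fin:
  fixes I :: "'a::comm_ring_1 set"
  assumes I: "ideal I" and G: "finite G" and r: "\<forall>g\<in>G. \<exists>k. g ^ k \<in> I"
  shows "\<exists>n. ideal_pow (R.span G) n \<subseteq> I"
  using G r
proof (induction G rule: finite_induct)
  case empty
  have "ideal_pow (R.span {}) 1 \<subseteq> {0::'a}"
    using prod_le_left[of "{0::'a}" UNIV] by (simp add: ideal_def)
  then show ?case using I ideal_0 by blast
next
  case (insert x G)
  then obtain n k where "ideal_pow (R.span G) n \<subseteq> I" "x ^ k \<in> I" by auto
  then show ?case using pow_insert[OF I] by blast
qed




lemma local_ideal: "local_ring m \<Longrightarrow> ideal m \<and> m \<noteq> UNIV"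
  by (auto simp: local_ring_def maximal_ideal_def)

lemma prime_pow: "prime_ideal P \<Longrightarrow> x ^ n \<in> P \<Longrightarrow> x \<in> P"
proof (induction n)
  case 0
  then show ?case using ideal_1[of P] by (auto simp: prime_ideal_def)
next
  case (Suc n)
  then show ?case by (auto simp: prime_ideal_def)
qed

context module begin

lemma nakayama:
  assumes N: "noetherian_ring TYPE('a)" and L: "local_ring m"
    and fin: "finite S" and sub: "span S \<subseteq> idmul scale m (span S)"
  shows "span S = {0}"
  using fin sub
proof (induction S rule: finite_induct)
  case empty
  then show ?case by simp
next
  case (insert g S)
  have mi: "ideal m" using local_ideal[OF L] by simp
  let ?R = "{v. \<exists>a\<in>m. v - scale a g \<in> span S}"
  have "idmul scale m (span (insert g S)) \<subseteq> ?R"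
  proof (rule idmul_sub)
    show "subspace ?R"
      unfolding subspace_def
    proof (intro conjI ballI allI)
      show "0 \<in> ?R" using mi by (auto intro!: bexI[of _ 0] simp: ideal_0 span_zero)
    next
      fix x y assume "x \<in> ?R" "y \<in> ?R"
      then obtain a1 a2 where a: "a1 \<in> m" "x - scale a1 g \<in> span S" "a2 \<in> m" "y - scale a2 g \<in> span S"
        by blast
      have "x + y - scale (a1 + a2) g = (x - scale a1 g) + (y - scale a2 g)"
        by (simp add: scale_left_distrib algebra_simps)
      also have "\<dots> \<in> span S" using a by (intro span_add)
      finally show "x + y \<in> ?R" using a mi by (auto intro: ideal_add)
    next
      fix c x assume "x \<in> ?R"
      then obtain a where a: "a \<in> m" "x - scale a g \<in> span S" by blast
      have "scale c x - scale (c * a) g = scale c (x - scale a g)"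
        by (simp add: scale_right_diff_distrib)
      also have "\<dots> \<in> span S" using a by (intro span_scale)
      finally show "scale c x \<in> ?R" using a mi by (auto intro: ideal_mult)
    qed
  next
    fix a x assume a: "a \<in> m" and x: "x \<in> span (insert g S)"
    then obtain r where r: "x - scale r g \<in> span S" by (auto simp: span_breakdown_eq)
    have "scale a x - scale (a * r) g = scale a (x - scale r g)"
      by (simp add: scale_right_diff_distrib)
    also have "\<dots> \<in> span S" using r by (intro span_scale)
    finally show "scale a x \<in> ?R" using a mi by (auto intro: ideal_mult2)
  qed
  moreover have "g \<in> span (insert g S)" by (simp add: span_base)
  ultimately have "g \<in> ?R" using insert.prems by blast
  then obtain a where a: "a \<in> m" "g - scale a g \<in> span S" by blast
  obtain u where u: "u * (1 - a) = 1" using local_unit[OF N L a(1)] by blast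
  have "g = scale u (g - scale a g)"
  proof -
    have "scale u (g - scale a g) = scale u (scale (1 - a) g)"
      by (simp add: scale_left_diff_distrib)
    also have "\<dots> = g" using u by simp
    finally show ?thesis by simp
  qed
  also have "\<dots> \<in> span S" using a by (intro span_scale)
  finally have gS: "g \<in> span S" .
  have eq: "span (insert g S) = span S"
    using gS unfolding span_def by (rule hull_redundant)
  then show ?case using insert eq by simp
qed

end




theorem lemma2p7:
  fixes scale :: "'a::comm_ring_1 \<Rightarrow> 'b::ab_group_add \<Rightarrow> 'b"
    and m I :: "'a set" and b :: nat
  assumes "module scale"
    and "noetherian_ring TYPE('a)"
    and "local_ring m"
    and "infinite (UNIV // residue_rel m)"
    and "m_primary m I"
    and "fin_gen scale"
    and "module_dim scale = 1"
    and "0 < b"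
    and "idmul scale I UNIV \<subseteq> idmul scale (ideal_pow m b) UNIV"
  shows "enat b \<le> h_Gbar scale I 0"
proof -
  interpret module scale by fact
  note N = assms(2) and L = assms(3)
  have mi: "ideal m" and mU: "m \<noteq> UNIV" using local_ideal[OF L] by auto
  have Ii: "ideal I" and radI: "radical I = m" using assms(5) by (auto simp: m_primary_def)
  define H where "H = H0_comp scale I 0"
  define Mi where "Mi i = idmul scale (ideal_pow m i) UNIV" for i
  define Hs where "Hs j = {h + z | h z. h \<in> H \<and> z \<in> Mi j}" for j
  define Hk where "Hk k = {x. \<forall>j\<ge>k. \<forall>a\<in>ideal_pow I j. scale a x \<in> idmul scale (ideal_pow I (Suc j)) UNIV}" for k
  have allUNIV: "idmul scale UNIV UNIV = UNIV"
  proof -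
    have "x \<in> idmul scale UNIV UNIV" for x using idmul_mem[of 1 UNIV x UNIV] by simp
    then show ?thesis by auto
  qed
  have f0: "filt scale I 0 = UNIV" by (simp add: filt_def allUNIV)
  have H_eq: "H = {x. \<exists>k. x \<in> Hk k}"
    by (auto simp: H_def H0_comp_def Hk_def f0 filt_def allUNIV)
  have Hk_sub: "subspace (Hk k)" for k
    unfolding subspace_def
  proof (intro conjI ballI allI)
    show "0 \<in> Hk k" by (simp add: Hk_def subspace_0[OF idmul_subspace])
  next
    fix x y assume "x \<in> Hk k" "y \<in> Hk k"
    then show "x + y \<in> Hk k"
      by (auto simp: Hk_def scale_right_distrib intro!: subspace_add[OF idmul_subspace])
  next
    fix c x assume x: "x \<in> Hk k"
    show "scale c x \<in> Hk k"
      unfolding Hk_def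
    proof (intro CollectI allI impI ballI)
      fix j a assume "k \<le> j" "a \<in> ideal_pow I j"
      then have "scale a x \<in> idmul scale (ideal_pow I (Suc j)) UNIV" using x by (auto simp: Hk_def)
      then have "scale c (scale a x) \<in> idmul scale (ideal_pow I (Suc j)) UNIV"
        by (rule subspace_scale[OF idmul_subspace])
      then show "scale a (scale c x) \<in> idmul scale (ideal_pow I (Suc j)) UNIV"
        by (simp only: scale_left_commute[of a c])
    qed
  qed
  have Hk_mono: "k \<le> k' \<Longrightarrow> Hk k \<subseteq> Hk k'" for k k' by (auto simp: Hk_def)
  have H_sub: "subspace H"
    unfolding subspace_def
  proof (intro conjI ballI allI)
    show "0 \<in> H" unfolding H_eq using subspace_0[OF Hk_sub] by blast
  next
    fix x y assume "x \<in> H" "y \<in> H"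
    then obtain k1 k2 where "x \<in> Hk k1" "y \<in> Hk k2" unfolding H_eq by blast
    then have "x \<in> Hk (max k1 k2)" "y \<in> Hk (max k1 k2)" using Hk_mono[of k1 "max k1 k2"] Hk_mono[of k2 "max k1 k2"] by auto
    then show "x + y \<in> H" unfolding H_eq using subspace_add[OF Hk_sub] by blast
  next
    fix c x assume "x \<in> H"
    then obtain k where "x \<in> Hk k" unfolding H_eq by blast
    then show "scale c x \<in> H" unfolding H_eq using subspace_scale[OF Hk_sub] by blast
  qed
  have Mi_sub: "subspace (Mi i)" for i by (simp add: Mi_def idmul_subspace)
  have Mi_mono: "i \<le> j \<Longrightarrow> Mi j \<subseteq> Mi i" for i j
    unfolding Mi_def by (intro idmul_mono pow_antimono) auto
  have Mi0: "Mi 0 = UNIV" by (simp add: Mi_def allUNIV)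
  have mSuc: "scale a z \<in> Mi (Suc i)" if "a \<in> m" "z \<in> Mi i" for a z i
    using L1[of a m z "ideal_pow m i"] that by (simp add: Mi_def)
  have Mi_Suc: "Mi (Suc i) = idmul scale m (Mi i)" for i by (simp add: Mi_def idmul_prod)
  have IM_H: "idmul scale I UNIV \<subseteq> H"
  proof
    fix x assume x: "x \<in> idmul scale I UNIV"
    have "x \<in> Hk 0"
      unfolding Hk_def
    proof (intro CollectI allI impI ballI)
      fix j a assume "0 \<le> j" "a \<in> ideal_pow I j"
      then have "scale a x \<in> idmul scale (ideal_prod (ideal_pow I j) I) UNIV" using x by (rule_tac L1)
      also have "ideal_prod (ideal_pow I j) I = ideal_pow I (Suc j)" by (simp add: prod_comm[of _ I])
      finally show "scale a x \<in> idmul scale (ideal_pow I (Suc j)) UNIV" .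
    qed
    then show "x \<in> H" unfolding H_eq by blast
  qed
  obtain n0 where n0: "ideal_pow m n0 \<subseteq> I"
  proof -
    obtain G where G: "finite G" "m = R.span G" using fg[OF N mi] by blast
    have "\<forall>g\<in>G. \<exists>k. g ^ k \<in> I"
    proof
      fix g assume "g \<in> G"
      then have "g \<in> m" using G(2) by (simp add: R.span_base)
      then show "\<exists>k. g ^ k \<in> I" using radI by (auto simp: radical_def)
    qed
    then obtain n where "ideal_pow (R.span G) n \<subseteq> I" using pow_fin[OF Ii G(1)] by blast
    then show ?thesis using G(2) that by simp
  qed
  have Mn0_H: "Mi n0 \<subseteq> H"
    using idmul_mono[OF n0 order_refl[of UNIV]] IM_H unfolding Mi_def by blast
  have Hs_sub: "subspace (Hs j)" for j
    unfolding subspace_def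
  proof (intro conjI ballI allI)
    show "0 \<in> Hs j" unfolding Hs_def using subspace_0[OF H_sub] subspace_0[OF Mi_sub] by force
  next
    fix x y assume "x \<in> Hs j" "y \<in> Hs j"
    then obtain h1 z1 h2 z2 where hz: "x = h1 + z1" "h1 \<in> H" "z1 \<in> Mi j" "y = h2 + z2" "h2 \<in> H" "z2 \<in> Mi j"
      unfolding Hs_def by blast
    have "x + y = (h1 + h2) + (z1 + z2)" using hz by (simp add: algebra_simps)
    moreover have "h1 + h2 \<in> H" by (rule subspace_add[OF H_sub hz(2) hz(5)])
    moreover have "z1 + z2 \<in> Mi j" by (rule subspace_add[OF Mi_sub hz(3) hz(6)])
    ultimately show "x + y \<in> Hs j" unfolding Hs_def by blast
  next
    fix c x assume "x \<in> Hs j"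
    then obtain h z where hz: "x = h + z" "h \<in> H" "z \<in> Mi j" unfolding Hs_def by blast
    have "scale c x = scale c h + scale c z" using hz by (simp add: scale_right_distrib)
    moreover have "scale c h \<in> H" by (rule subspace_scale[OF H_sub hz(2)])
    moreover have "scale c z \<in> Mi j" by (rule subspace_scale[OF Mi_sub hz(3)])
    ultimately show "scale c x \<in> Hs j" unfolding Hs_def by blast
  qed
  have H_Hs: "H \<subseteq> Hs j" for j
  proof
    fix h assume "h \<in> H"
    moreover have "(0::'b) \<in> Mi j" by (rule subspace_0[OF Mi_sub])
    ultimately show "h \<in> Hs j" unfolding Hs_def by force
  qed
  have Mi_Hs: "Mi j \<subseteq> Hs j" for j
  proof
    fix z assume "z \<in> Mi j"
    moreover have "(0::'b) \<in> H" by (rule subspace_0[OF H_sub])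
    ultimately show "z \<in> Hs j" unfolding Hs_def by force
  qed
  have Hs0: "Hs 0 = UNIV" using Mi_Hs[of 0] Mi0 by auto
  have Hs_mono: "i \<le> j \<Longrightarrow> Hs j \<subseteq> Hs i" for i j
    using Mi_mono[of i j] unfolding Hs_def by blast

  have key: "\<not> Mi (b - 1) \<subseteq> H"
  proof
    assume A: "Mi (b - 1) \<subseteq> H"
    obtain S where S: "finite S" "span S = UNIV" using assms(6) by (auto simp: fin_gen_def shull)
    have each: "\<exists>Kg. \<forall>c\<in>ideal_pow m (b - 1). scale c g \<in> Hk Kg" for g
    proof -
      define Lc where "Lc k = {c. scale c g \<in> Hk k}" for k
      have "(\<forall>k. ideal (Lc k)) \<and> (\<forall>k. Lc k \<subseteq> Lc (Suc k))"
        unfolding Lc_def using pre_ideal[OF Hk_sub] Hk_mono[of k "Suc k" for k] by auto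
      moreover have "\<forall>f :: nat \<Rightarrow> 'a set. (\<forall>n. ideal (f n)) \<and> (\<forall>n. f n \<subseteq> f (Suc n))
          \<longrightarrow> (\<exists>N. \<forall>n\<ge>N. f n = f N)" using N by (simp only: noetherian_ring_def)
      ultimately have "\<exists>M. \<forall>n\<ge>M. Lc n = Lc M" by (rule_tac mp[OF spec[of _ Lc]])
      then obtain Nn where Nn: "\<forall>n\<ge>Nn. Lc n = Lc Nn" by (elim exE)
      show ?thesis
      proof (rule exI[of _ Nn], rule ballI)
        fix c assume c: "c \<in> ideal_pow m (b - 1)"
        have "scale c g \<in> Mi (b - 1)" unfolding Mi_def using c by (rule idmul_mem) simp
        then have "scale c g \<in> H" using A by blast
        then obtain k where "scale c g \<in> Hk k" unfolding H_eq by blast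
        then have "c \<in> Lc (max k Nn)" using Hk_mono[of k "max k Nn"] by (auto simp: Lc_def)
        also have "Lc (max k Nn) = Lc Nn" using Nn by (elim allE[of _ "max k Nn"]) simp
        finally show "scale c g \<in> Hk Nn" by (simp add: Lc_def)
      qed
    qed
    then have "\<forall>g. \<exists>Kg. \<forall>c\<in>ideal_pow m (b - 1). scale c g \<in> Hk Kg" by blast
    then obtain Kf where Kf: "\<forall>g. \<forall>c\<in>ideal_pow m (b - 1). scale c g \<in> Hk (Kf g)"
      by (metis choice)
    define K where "K = Max (insert 0 (Kf ` S))"
    have KS: "Kf g \<le> K" if "g \<in> S" for g using S(1) that by (auto simp: K_def)
    have "Mi (b - 1) \<subseteq> span {scale g s | g s. g \<in> ideal_pow m (b - 1) \<and> s \<in> S}"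
      unfolding Mi_def
    proof (rule L4[OF S(2)])
      show "ideal_pow m (b - 1) = R.span (ideal_pow m (b - 1))"
        using ideal_pow_ideal[of m "b - 1"] unfolding ideal_eq by (metis R.span_eq_iff)
    qed
    also have "\<dots> \<subseteq> Hk K"
    proof (rule span_minimal[OF _ Hk_sub])
      show "{scale g s | g s. g \<in> ideal_pow m (b - 1) \<and> s \<in> S} \<subseteq> Hk K"
      proof safe
        fix g s assume "g \<in> ideal_pow m (b - 1)" "s \<in> S"
        then have "scale g s \<in> Hk (Kf s)" using Kf by blast
        moreover have "Hk (Kf s) \<subseteq> Hk K" using KS \<open>s \<in> S\<close> by (intro Hk_mono) simp
        ultimately show "scale g s \<in> Hk K" by blast
      qed
    qed
    finally have MK: "Mi (b - 1) \<subseteq> Hk K" .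
    define N0 where "N0 = idmul scale (ideal_pow I K) (Mi (b - 1))"
    have "N0 \<subseteq> idmul scale (ideal_pow I (Suc K)) UNIV"
      unfolding N0_def
    proof (rule idmul_sub[OF idmul_subspace])
      fix a x assume a: "a \<in> ideal_pow I K" and x: "x \<in> Mi (b - 1)"
      then have "x \<in> Hk K" using MK by blast
      then show "scale a x \<in> idmul scale (ideal_pow I (Suc K)) UNIV" using a unfolding Hk_def by blast
    qed
    also have "ideal_pow I (Suc K) = ideal_prod (ideal_pow I K) I"
      by (simp only: ideal_pow.simps, rule prod_comm)
    also have "idmul scale (ideal_prod (ideal_pow I K) I) UNIV = idmul scale (ideal_pow I K) (idmul scale I UNIV)"
      by (rule idmul_prod)
    also have "\<dots> \<subseteq> idmul scale (ideal_pow I K) (Mi b)"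
      using assms(9) unfolding Mi_def by (rule idmul_mono[OF order_refl])
    also have "Mi b = idmul scale m (Mi (b - 1))" using Mi_Suc[of "b - 1"] assms(8) by simp
    also have "idmul scale (ideal_pow I K) (idmul scale m (Mi (b - 1))) \<subseteq> idmul scale m N0"
      unfolding N0_def by (rule L3)
    finally have N0m: "N0 \<subseteq> idmul scale m N0" .
    define J' where "J' = ideal_prod (ideal_pow I K) (ideal_pow m (b - 1))"
    have N0J: "N0 = idmul scale J' UNIV" by (simp add: N0_def J'_def Mi_def idmul_prod)
    obtain G' where G': "finite G'" "J' = R.span G'" using fg[OF N ideal_prod_ideal] J'_def by blast
    define T0 where "T0 = {scale g s | g s. g \<in> G' \<and> s \<in> S}"
    have "T0 = (\<lambda>(g, s). scale g s) ` (G' \<times> S)" by (auto simp: T0_def)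
    then have fT0: "finite T0" using G'(1) S(1) by simp
    have NT: "N0 = span T0"
    proof
      show "N0 \<subseteq> span T0" unfolding N0J T0_def by (rule L4[OF S(2) G'(2)])
      show "span T0 \<subseteq> N0" unfolding N0J T0_def
        by (rule span_minimal[OF _ idmul_subspace]) (auto intro!: idmul_mem R.span_base simp: G'(2))
    qed
    then have "span T0 = {0}" using nakayama[OF N L fT0] N0m by simp
    then have N00: "N0 = {0}" using NT by simp
    have J'ann: "J' \<subseteq> ann scale"
    proof
      fix c assume c: "c \<in> J'"
      have "scale c x = 0" for x
        using idmul_mem[OF c, of x UNIV] N00 N0J by simp
      then show "c \<in> ann scale" by (simp add: ann_def)
    qed
    have primes: "P = m" if P: "prime_ideal P" "ann scale \<subseteq> P" for P
    proof -
      have Pi: "ideal P" "P \<noteq> UNIV" using P(1) by (auto simp: prime_ideal_def)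
      have "m \<subseteq> P"
      proof
        fix c assume c: "c \<in> m"
        show "c \<in> P"
        proof (cases "I \<subseteq> P")
          case True
          from c radI obtain n where "c ^ n \<in> I" by (auto simp: radical_def)
          then show ?thesis using True prime_pow[OF P(1)] by blast
        next
          case False
          then obtain a where a: "a \<in> I" "a \<notin> P" by blast
          have "a ^ K * c ^ (b - 1) \<in> J'" unfolding J'_def by (intro prod_mem pow_mem a c)
          then have "a ^ K * c ^ (b - 1) \<in> P" using J'ann P(2) by blast
          then have "a ^ K \<in> P \<or> c ^ (b - 1) \<in> P" using P(1) by (simp add: prime_ideal_def)
          then show ?thesis using a prime_pow[OF P(1)] by blast
        qed
      qed
      then show "P = m" using L Pi unfolding local_ring_def maximal_ideal_def by blast
    qed
    have "krull_dim_quot (ann scale) \<le> 0"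
      unfolding krull_dim_quot_def
    proof (rule Sup_least)
      fix x assume "x \<in> {enat n | n. \<exists>P :: nat \<Rightarrow> 'a set. (\<forall>i\<le>n. prime_ideal (P i) \<and> ann scale \<subseteq> P i) \<and> (\<forall>i<n. P i \<subset> P (Suc i))}"
      then obtain n and P :: "nat \<Rightarrow> 'a set" where x: "x = enat n"
        and P1: "\<forall>i\<le>n. prime_ideal (P i) \<and> ann scale \<subseteq> P i" and P2: "\<forall>i<n. P i \<subset> P (Suc i)" by blast
      show "x \<le> 0"
      proof (cases n)
        case 0 then show ?thesis using x by (simp add: zero_enat_def)
      next
        case (Suc n')
        have "P 0 = m" using P1[rule_format, of 0] primes by blast
        moreover have "P (Suc 0) = m" using P1[rule_format, of "Suc 0"] primes Suc by blast
        moreover have "P 0 \<subset> P (Suc 0)" using P2 Suc by blast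
        ultimately show ?thesis by simp
      qed
    qed
    then show False using assms(7) by (simp add: module_dim_def)
  qed

  have chainL: "\<not> Mi i \<subseteq> Hs (Suc i)" if i: "i < b - 1" for i
  proof
    assume A: "Mi i \<subseteq> Hs (Suc i)"
    have step: "Mi (Suc i) \<subseteq> Hs (Suc j)" if Mj: "Mi i \<subseteq> Hs j" for j
      unfolding Mi_Suc
    proof (rule idmul_sub[OF Hs_sub])
      fix a x assume a: "a \<in> m" and x: "x \<in> Mi i"
      then obtain h z where hz: "x = h + z" "h \<in> H" "z \<in> Mi j" using Mj unfolding Hs_def by blast
      have "scale a x = scale a h + scale a z" by (simp add: hz scale_right_distrib)
      moreover have "scale a h \<in> H" by (rule subspace_scale[OF H_sub hz(2)])
      moreover have "scale a z \<in> Mi (Suc j)" by (rule mSuc[OF a hz(3)])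
      ultimately show "scale a x \<in> Hs (Suc j)" unfolding Hs_def by blast
    qed
    have all: "Mi i \<subseteq> Hs (i + n)" for n
    proof (induction n)
      case 0 show ?case using Mi_Hs by simp
    next
      case (Suc n)
      have B: "Mi (Suc i) \<subseteq> Hs (Suc (i + n))" by (rule step[OF Suc.IH])
      show ?case
      proof
        fix x assume "x \<in> Mi i"
        then obtain h z where hz: "x = h + z" "h \<in> H" "z \<in> Mi (Suc i)" using A unfolding Hs_def by blast
        then obtain h' z' where hz': "z = h' + z'" "h' \<in> H" "z' \<in> Mi (Suc (i + n))"
          using B unfolding Hs_def by blast
        have "x = (h + h') + z'" using hz hz' by (simp add: add.assoc)
        moreover have "h + h' \<in> H" by (rule subspace_add[OF H_sub hz(2) hz'(2)])
        ultimately show "x \<in> Hs (i + Suc n)" using hz'(3) unfolding Hs_def by auto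
      qed
    qed
    have "Hs (i + n0) \<subseteq> H"
    proof
      fix y assume "y \<in> Hs (i + n0)"
      then obtain h z where hz: "y = h + z" "h \<in> H" "z \<in> Mi (i + n0)" unfolding Hs_def by blast
      moreover have "Mi (i + n0) \<subseteq> H" using Mi_mono[of n0 "i + n0"] Mn0_H by auto
      ultimately show "y \<in> H" using subspace_add[OF H_sub] by blast
    qed
    then have "Mi i \<subseteq> H" using all[of n0] by blast
    moreover have "Mi (b - 1) \<subseteq> Mi i" using i by (intro Mi_mono) simp
    ultimately show False using key by blast
  qed

  define C where "C j = (if j = 0 then H else Hs (b - j))" for j
  have "enat b \<in> {enat n | n. \<exists>C :: nat \<Rightarrow> 'b set. C 0 = H0_comp scale I 0 \<and> C n = filt scale I 0
      \<and> (\<forall>i\<le>n. submod scale (C i)) \<and> (\<forall>i<n. C i \<subset> C (Suc i))}"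
  proof -
    have "C 0 = H0_comp scale I 0" by (simp add: C_def H_def)
    moreover have "C b = filt scale I 0" using assms(8) by (simp add: C_def Hs0 f0)
    moreover have "\<forall>i\<le>b. submod scale (C i)" by (simp add: C_def submod_eq H_sub Hs_sub)
    moreover have "\<forall>i<b. C i \<subset> C (Suc i)"
    proof (intro allI impI)
      fix i assume i: "i < b"
      show "C i \<subset> C (Suc i)"
      proof (cases "i = 0")
        case True
        have "C (Suc i) = Hs (b - 1)" using True by (simp add: C_def)
        moreover have "C i = H" using True by (simp add: C_def)
        moreover have "H \<subseteq> Hs (b - 1)" by (rule H_Hs)
        moreover have "Hs (b - 1) \<noteq> H" using key Mi_Hs[of "b - 1"] by blast
        ultimately show ?thesis by auto
      next
        case False
        define j where "j = b - Suc i"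
        have j: "j < b - 1" "b - i = Suc j" using i False by (auto simp: j_def)
        have "C i = Hs (Suc j)" "C (Suc i) = Hs j" using False j by (auto simp: C_def j_def)
        moreover have "Hs (Suc j) \<subseteq> Hs j" by (rule Hs_mono) simp
        moreover have "Hs (Suc j) \<noteq> Hs j" using chainL[OF j(1)] Mi_Hs[of j] by auto
        ultimately show ?thesis by auto
      qed
    qed
    ultimately show ?thesis by blast
  qed
  then show ?thesis unfolding h_Gbar_def mlength_def by (rule Sup_upper)
qed


end
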